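(* Let $\mathcal{A}$ be a $d$-regular, strongly $\chi$-colorable 2-complex with coloring $C$, let $\mathcal{G}=G_1\times\cdots\times G_\chi$ and $F_1,\dots,F_\chi$ as in the construction below, and suppose that $\mathcal{C}=HDZ^{-}[\mathcal{A},C,\mathcal{G},F_1,\dots,F_\chi]$ is a commutative triplet structure. Then $\mathcal{C}$ has $|\mathcal{G}|$ vertices, every vertex of $\mathcal{C}$ lies in exactly $3|\mathcal{A}(2)|$ triangles, and $\mathcal{C}$ is $2d$-regular.
   Context: For a 2-complex $X$, $X(1)$ is the set of 2-sets in triangles, $X(2)$ the set of triangles; $X$ is $d$-regular if each edge of $X(1)$ lies in exactly $d$ triangles. A coloring is strong if every triangle has three differently colored vertices. Construction: let $V^c=\{V^c_1,\dots,V^c_{K_c}\}$ be the vertices of color $c$ ($K_c$ even); $F_c\subseteq G_c$ with $|F_c|=K_c$, ordered $F^c_1,\dots,F^c_{K_c}$ with $(F^c_i)^{-1}=F^c_{i+K_c/2}$ (indices mod $K_c$) and no element of order 2; identify $F^c_i$ with the element of $\mathcal{G}$ equal to $F^c_i$ in coordinate $c$ and identity elsewhere; $\phi(V^c_i)=F^c_i$; $\mathcal{S}$ is the complex with triangles $\{\phi(a),\phi(b),\phi(e)\}$, $\{a,b,e\}\in\mathcal{A}(2)$; $HDZ^{-}[\mathcal{A},C,\mathcal{G},F_1,\dots,F_\chi]=\{\sigma\cdot g:\sigma\in\mathcal{S},g\in\mathcal{G}\}$ where $\sigma\cdot g=\{sg:s\in\sigma\}$. With $\mathcal{T}=\mathcal{S}(1)$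 and $\mathcal{T}_o$ the ordered pairs of elements of $\mathcal{T}$, this is a commutative triplet structure if: (0) $\{s,s^{-1}\}\notin\mathcal{T}$; (A) $\mathcal{S}$ is regular; (B) $ab=ba$ for $\{a,b\}\in\mathcal{T}$; (C) $\{a,b\}\in\mathcal{T}\iff\{a^{-1},b^{-1}\}\in\mathcal{T}$; (D) for $t\ne t'\in\mathcal{T}_o$, $t_1t_2^{-1}=t'_1(t'_2)^{-1}$ implies $t'_2=t_1^{-1}$, $t'_1=t_2^{-1}$; (E) the 1-skeleton of $\mathcal{S}$ is connected. *)

theory Defs
  imports "HOL-Algebra.Algebra"
begin

definition complex2 :: "'a set \<Rightarrow> 'a set set \<Rightarrow> bool" where
  "complex2 V X2 \<longleftrightarrow> finite V \<and> (\<forall>t\<in>X2. t \<subseteq> V \<and> card t = 3)"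

definition edges2 :: "'a set set \<Rightarrow> 'a set set" where
  "edges2 X2 = {e. card e = 2 \<and> (\<exists>t\<in>X2. e \<subseteq> t)}"

definition regular_cx :: "nat \<Rightarrow> 'a set set \<Rightarrow> bool" where
  "regular_cx d X2 \<longleftrightarrow> (\<forall>e\<in>edges2 X2. card {t\<in>X2. e \<subseteq> t} = d)"

definition strong_coloring :: "('a \<Rightarrow> nat) \<Rightarrow> nat \<Rightarrow> 'a set \<Rightarrow> 'a set set \<Rightarrow> bool" where
  "strong_coloring C chi V X2 \<longleftrightarrow> C ` V \<subseteq> {..<chi} \<and> (\<forall>t\<in>X2. card (C ` t) = 3)"

definition emb :: "(nat \<Rightarrow> 'g monoid) \<Rightarrow> nat \<Rightarrow> nat \<Rightarrow> 'g \<Rightarrow> (nat \<Rightarrow> 'g)" where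
  "emb G chi c x = (\<lambda>j\<in>{..<chi}. if j = c then x else \<one>\<^bsub>G j\<^esub>)"

definition hdz :: "('b, 'c) monoid_scheme \<Rightarrow> 'b set set \<Rightarrow> 'b set set" where
  "hdz GG S2 = {(\<lambda>s. s \<otimes>\<^bsub>GG\<^esub> g) ` \<sigma> | \<sigma> g. \<sigma> \<in> S2 \<and> g \<in> carrier GG}"

text \<open>Commutative triplet structure conditions (0),(A)-(E) for S (given by its
  triangles S2) inside the group GG, with T = S(1) and T_o the ordered pairs.\<close>
definition comm_triplet_structure :: "('b, 'c) monoid_scheme \<Rightarrow> 'b set set \<Rightarrow> bool" where
  "comm_triplet_structure GG S2 \<longleftrightarrow>
     (let T = edges2 S2; To = {(a, b). {a, b} \<in> T} in
       (\<forall>s\<in>carrier GG. {s, inv\<^bsub>GG\<^esub> s} \<notin> T) \<and>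
       (\<exists>k. regular_cx k S2) \<and>
       (\<forall>a b. {a, b} \<in> T \<longrightarrow> a \<otimes>\<^bsub>GG\<^esub> b = b \<otimes>\<^bsub>GG\<^esub> a) \<and>
       (\<forall>a\<in>carrier GG. \<forall>b\<in>carrier GG. {a, b} \<in> T \<longleftrightarrow> {inv\<^bsub>GG\<^esub> a, inv\<^bsub>GG\<^esub> b} \<in> T) \<and>
       (\<forall>t\<in>To. \<forall>t'\<in>To. t \<noteq> t' \<and>
           fst t \<otimes>\<^bsub>GG\<^esub> inv\<^bsub>GG\<^esub> (snd t) = fst t' \<otimes>\<^bsub>GG\<^esub> inv\<^bsub>GG\<^esub> (snd t')
           \<longrightarrow> snd t' = inv\<^bsub>GG\<^esub> (fst t) \<and> fst t' = inv\<^bsub>GG\<^esub> (snd t)) \<and>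
       (\<forall>x\<in>\<Union>S2. \<forall>y\<in>\<Union>S2. (x, y) \<in> To\<^sup>*))"

end

theory Submission
  imports Defs
begin

locale ctsl = group GG for GG (structure) +
  fixes S2
  assumes S2_sub: "\<sigma> \<in> S2 \<Longrightarrow> \<sigma> \<subseteq> carrier GG"
    and S2_card: "\<sigma> \<in> S2 \<Longrightarrow> card \<sigma> = 3"
    and S2_fin: "finite S2" and S2_ne: "S2 \<noteq> {}"
    and ax0: "s \<in> carrier GG \<Longrightarrow> {s, inv s} \<notin> edges2 S2"
    and axB: "{a, b} \<in> edges2 S2 \<Longrightarrow> a \<otimes> b = b \<otimes> a"
    and axC: "a \<in> carrier GG \<Longrightarrow> b \<in> carrier GG \<Longrightarrow> {a, b} \<in> edges2 S2 \<Longrightarrow> {inv a, inv b} \<in> edges2 S2"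
    and axD: "{a, b} \<in> edges2 S2 \<Longrightarrow> {c, e} \<in> edges2 S2 \<Longrightarrow> (a, b) \<noteq> (c, e) \<Longrightarrow>
       a \<otimes> inv b = c \<otimes> inv e \<Longrightarrow> e = inv a \<and> c = inv b"
begin

lemma edge_I: "\<sigma> \<in> S2 \<Longrightarrow> a \<in> \<sigma> \<Longrightarrow> b \<in> \<sigma> \<Longrightarrow> a \<noteq> b \<Longrightarrow> {a, b} \<in> edges2 S2"
  unfolding edges2_def by auto

lemma edge_carrier: "{a, b} \<in> edges2 S2 \<Longrightarrow> a \<in> carrier GG \<and> b \<in> carrier GG"
  unfolding edges2_def using S2_sub by blast

lemma S2_fin_el: "\<sigma> \<in> S2 \<Longrightarrow> finite \<sigma>"
  using S2_card by (metis card.infinite zero_neq_numeral)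

lemma shift_one:
  assumes s: "\<sigma> \<in> S2" and s': "\<sigma>' \<in> S2" and h: "h \<in> carrier GG"
    and eq: "\<sigma> = (\<lambda>s. s \<otimes> h) ` \<sigma>'"
  shows "h = \<one>"
proof -
  obtain p a a' where pa: "\<sigma>' = {p, a, a'}" "p \<noteq> a" "a \<noteq> a'" "p \<noteq> a'"
    using S2_card[OF s'] card_3_iff by metis
  have c: "p \<in> carrier GG" "a \<in> carrier GG" "a' \<in> carrier GG" using S2_sub[OF s'] pa by auto
  have key: "h = \<one> \<or> (q \<otimes> h = inv p \<and> p \<otimes> h = inv q)" if q: "q \<in> {a, a'}" for q
  proof -
    have qc: "q \<in> carrier GG" using q c by auto
    have qp: "q \<noteq> p" using q pa by auto
    have e1: "{p, q} \<in> edges2 S2" using edge_I[OF s'] pa q qp by auto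
    have e2: "{p \<otimes> h, q \<otimes> h} \<in> edges2 S2"
      apply (rule edge_I[OF s]) using eq pa q apply auto[2] using qp qc c h by simp
    have m: "p \<otimes> inv q = (p \<otimes> h) \<otimes> inv (q \<otimes> h)"
      using qc c h by (simp add: inv_mult_group m_assoc[symmetric]) (simp add: m_assoc)
    show ?thesis
    proof (cases "p \<otimes> h = p")
      case True then show ?thesis using c h by simp
    next
      case False
      then have "(p, q) \<noteq> (p \<otimes> h, q \<otimes> h)" by auto
      from axD[OF e1 e2 this m] show ?thesis by blast
    qed
  qed
  show ?thesis
  proof (rule ccontr)
    assume "h \<noteq> \<one>"
    then have "a \<otimes> h = inv p" "p \<otimes> h = inv a" "a' \<otimes> h = inv p" "p \<otimes> h = inv a'"
      using key[of a] key[of a'] by auto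
    then have "a \<otimes> h = a' \<otimes> h" by simp
    then have "a = a'" using c h by simp
    then show False using pa by simp
  qed
qed

lemma shift_inj:
  assumes s: "\<sigma> \<in> S2" and s': "\<sigma>' \<in> S2" and g: "g \<in> carrier GG" and g': "g' \<in> carrier GG"
    and eq: "(\<lambda>s. s \<otimes> g) ` \<sigma> = (\<lambda>s. s \<otimes> g') ` \<sigma>'"
  shows "\<sigma> = \<sigma>' \<and> g = g'"
proof -
  have "\<sigma> = (\<lambda>s. s \<otimes> inv g) ` ((\<lambda>s. s \<otimes> g) ` \<sigma>)"
    using S2_sub[OF s] g by (force simp: image_image m_assoc)
  also have "\<dots> = (\<lambda>s. s \<otimes> (g' \<otimes> inv g)) ` \<sigma>'"
    unfolding eq image_image using S2_sub[OF s'] g g' by (intro image_cong) (auto simp: m_assoc)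
  finally have "g' \<otimes> inv g = \<one>" using shift_one[OF s s'] g g' by auto
  then have gg: "g' = g" using g g' by (metis inv_closed inv_inv inv_equality)
  then have "(\<lambda>s. s \<otimes> g) ` \<sigma> = (\<lambda>s. s \<otimes> g) ` \<sigma>'" using eq by simp
  moreover have "inj_on (\<lambda>s. s \<otimes> g) (carrier GG)" using g by (auto simp: inj_on_def)
  ultimately have "\<sigma> = \<sigma>'" using S2_sub[OF s] S2_sub[OF s'] by (meson inj_on_image_eq_iff)
  then show ?thesis using gg by simp
qed

lemma union_hdz: "\<Union>(hdz GG S2) = carrier GG"
proof
  show "\<Union>(hdz GG S2) \<subseteq> carrier GG" unfolding hdz_def using S2_sub by auto
  show "carrier GG \<subseteq> \<Union>(hdz GG S2)"
  proof
    fix x assume x: "x \<in> carrier GG"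
    obtain \<sigma> where s: "\<sigma> \<in> S2" using S2_ne by auto
    then obtain p where p: "p \<in> \<sigma>" using S2_card by fastforce
    have pc: "p \<in> carrier GG" using S2_sub s p by auto
    have "x = p \<otimes> (inv p \<otimes> x)" using pc x by (simp add: m_assoc[symmetric])
    then have "x \<in> (\<lambda>s. s \<otimes> (inv p \<otimes> x)) ` \<sigma>" using p by blast
    moreover have "(\<lambda>s. s \<otimes> (inv p \<otimes> x)) ` \<sigma> \<in> hdz GG S2"
      unfolding hdz_def using s pc x by blast
    ultimately show "x \<in> \<Union>(hdz GG S2)" by blast
  qed
qed

lemma vertex_count:
  assumes x: "x \<in> carrier GG"
  shows "card {\<tau> \<in> hdz GG S2. x \<in> \<tau>} = 3 * card S2"
proof -
  let ?f = "\<lambda>(\<sigma>, p). (\<lambda>s. s \<otimes> (inv p \<otimes> x)) ` \<sigma>"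
  have img: "{\<tau> \<in> hdz GG S2. x \<in> \<tau>} = ?f ` (SIGMA \<sigma>:S2. \<sigma>)"
  proof (intro equalityI subsetI)
    fix \<tau> assume "\<tau> \<in> {\<tau> \<in> hdz GG S2. x \<in> \<tau>}"
    then obtain \<sigma> g p where t: "\<tau> = (\<lambda>s. s \<otimes> g) ` \<sigma>" "\<sigma> \<in> S2" "g \<in> carrier GG"
      "p \<in> \<sigma>" "x = p \<otimes> g"
      unfolding hdz_def by auto
    have pc: "p \<in> carrier GG" using S2_sub t by auto
    have "g = inv p \<otimes> x" using t pc by (simp add: m_assoc[symmetric])
    then show "\<tau> \<in> ?f ` (SIGMA \<sigma>:S2. \<sigma>)" using t by force
  next
    fix \<tau> assume "\<tau> \<in> ?f ` (SIGMA \<sigma>:S2. \<sigma>)"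
    then obtain \<sigma> p where t: "\<tau> = (\<lambda>s. s \<otimes> (inv p \<otimes> x)) ` \<sigma>" "\<sigma> \<in> S2" "p \<in> \<sigma>" by auto
    have pc: "p \<in> carrier GG" using S2_sub t by auto
    have "x = p \<otimes> (inv p \<otimes> x)" using pc x by (simp add: m_assoc[symmetric])
    then have "x \<in> \<tau>" using t by blast
    moreover have "\<tau> \<in> hdz GG S2" unfolding hdz_def using t pc x by blast
    ultimately show "\<tau> \<in> {\<tau> \<in> hdz GG S2. x \<in> \<tau>}" by blast
  qed
  have inj: "inj_on ?f (SIGMA \<sigma>:S2. \<sigma>)"
  proof (rule inj_onI, clarsimp)
    fix \<sigma> p \<sigma>' p' assume a: "\<sigma> \<in> S2" "p \<in> \<sigma>" "\<sigma>' \<in> S2" "p' \<in> \<sigma>'"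
      "(\<lambda>s. s \<otimes> (inv p \<otimes> x)) ` \<sigma> = (\<lambda>s. s \<otimes> (inv p' \<otimes> x)) ` \<sigma>'"
    have pc: "p \<in> carrier GG" "p' \<in> carrier GG" using S2_sub a by auto
    from shift_inj[OF a(1) a(3) _ _ a(5)] pc x
    have "\<sigma> = \<sigma>'" "inv p \<otimes> x = inv p' \<otimes> x" by auto
    then show "\<sigma> = \<sigma>' \<and> p = p'" using pc x by (metis inv_closed inv_inv r_cancel)
  qed
  have "card {\<tau> \<in> hdz GG S2. x \<in> \<tau>} = card (SIGMA \<sigma>:S2. \<sigma>)"
    unfolding img using inj by (rule card_image)
  also have "\<dots> = (\<Sum>\<sigma>\<in>S2. card \<sigma>)" using S2_fin S2_fin_el by simp
  also have "\<dots> = (\<Sum>\<sigma>\<in>S2. 3)" using S2_card by simp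
  finally show ?thesis by simp
qed

lemma edge_count:
  assumes reg: "regular_cx d S2"
  shows "regular_cx (2 * d) (hdz GG S2)"
  unfolding regular_cx_def
proof
  fix e assume "e \<in> edges2 (hdz GG S2)"
  then obtain x y \<tau>0 where e: "e = {x, y}" "x \<noteq> y" "\<tau>0 \<in> hdz GG S2" "e \<subseteq> \<tau>0"
    unfolding edges2_def by (auto simp: card_2_iff)
  then obtain \<sigma>0 g0 where t0: "\<tau>0 = (\<lambda>s. s \<otimes> g0) ` \<sigma>0" "\<sigma>0 \<in> S2" "g0 \<in> carrier GG"
    unfolding hdz_def by auto
  then obtain s0 r0 where sr: "s0 \<in> \<sigma>0" "r0 \<in> \<sigma>0" "x = s0 \<otimes> g0" "y = r0 \<otimes> g0"
    using e by auto
  have c0: "s0 \<in> carrier GG" "r0 \<in> carrier GG" using sr t0 S2_sub by auto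
  have xc: "x \<in> carrier GG" "y \<in> carrier GG" using sr c0 t0 by auto
  have rs0: "r0 \<noteq> s0" using sr e by auto
  have E0: "{r0, s0} \<in> edges2 S2" using edge_I[OF t0(2) sr(2) sr(1) rs0] .
  define w where "w = y \<otimes> inv x"
  have w0: "r0 \<otimes> inv s0 = w" unfolding w_def sr using c0 t0
    by (simp add: inv_mult_group m_assoc[symmetric]) (simp add: m_assoc)
  define Q where "Q = {(r, s). {r, s} \<in> edges2 S2 \<and> r \<otimes> inv s = w}"
  have E1: "{inv s0, inv r0} \<in> edges2 S2" using axC[OF c0(1) c0(2)] E0 by (simp add: insert_commute)
  have comm: "r0 \<otimes> s0 = s0 \<otimes> r0" using axB[OF E0] .
  have w1: "inv s0 \<otimes> inv (inv r0) = w"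
  proof -
    have "inv s0 \<otimes> r0 = r0 \<otimes> inv s0" using c0 comm
      by (metis inv_closed m_assoc m_closed r_inv l_inv r_one l_one)
    then show ?thesis using w0 c0 by simp
  qed
  have Qeq: "Q = {(r0, s0), (inv s0, inv r0)}"
  proof (intro equalityI subsetI)
    fix p assume "p \<in> Q"
    then obtain r s where p: "p = (r, s)" "{r, s} \<in> edges2 S2" "r \<otimes> inv s = w" unfolding Q_def by auto
    show "p \<in> {(r0, s0), (inv s0, inv r0)}"
    proof (cases "(r0, s0) = (r, s)")
      case False
      from axD[OF E0 p(2) False] w0 p(3) show ?thesis using p(1) by auto
    qed (use p in auto)
  next
    fix p assume "p \<in> {(r0, s0), (inv s0, inv r0)}"
    then show "p \<in> Q" unfolding Q_def using E0 E1 w0 w1 by auto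
  qed
  have Qd: "(r0, s0) \<noteq> (inv s0, inv r0)"
  proof
    assume "(r0, s0) = (inv s0, inv r0)"
    then have "r0 = inv s0" by (metis prod.inject)
    then have "{s0, inv s0} = {r0, s0}" by auto
    then have "{s0, inv s0} \<in> edges2 S2" using E0 by simp
    then show False using ax0 c0 by blast
  qed
  let ?B = "\<lambda>p. {\<sigma> \<in> S2. {fst p, snd p} \<subseteq> \<sigma>}"
  let ?f = "\<lambda>(p, \<sigma>). (\<lambda>s. s \<otimes> (inv (snd p) \<otimes> x)) ` \<sigma>"
  have img: "{\<tau> \<in> hdz GG S2. e \<subseteq> \<tau>} = ?f ` (SIGMA p:Q. ?B p)"
  proof (intro equalityI subsetI)
    fix \<tau> assume "\<tau> \<in> {\<tau> \<in> hdz GG S2. e \<subseteq> \<tau>}"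
    then obtain \<sigma> g s r where t: "\<tau> = (\<lambda>s. s \<otimes> g) ` \<sigma>" "\<sigma> \<in> S2" "g \<in> carrier GG"
      "s \<in> \<sigma>" "x = s \<otimes> g" "r \<in> \<sigma>" "y = r \<otimes> g"
      unfolding hdz_def e by auto
    have pc: "s \<in> carrier GG" "r \<in> carrier GG" using S2_sub t by auto
    have g: "g = inv s \<otimes> x" using t pc by (simp add: m_assoc[symmetric])
    have "r \<noteq> s" using t e by auto
    then have "{r, s} \<in> edges2 S2" using edge_I t by auto
    moreover have "r \<otimes> inv s = w" unfolding w_def t using pc t
      by (simp add: inv_mult_group m_assoc[symmetric]) (simp add: m_assoc)
    ultimately have "(r, s) \<in> Q" unfolding Q_def by auto
    then have "((r, s), \<sigma>) \<in> (SIGMA p:Q. ?B p)" using t by auto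
    then show "\<tau> \<in> ?f ` (SIGMA p:Q. ?B p)" using t g by force
  next
    fix \<tau> assume "\<tau> \<in> ?f ` (SIGMA p:Q. ?B p)"
    then obtain r s \<sigma> where t: "\<tau> = (\<lambda>z. z \<otimes> (inv s \<otimes> x)) ` \<sigma>" "\<sigma> \<in> S2" "(r, s) \<in> Q"
      "r \<in> \<sigma>" "s \<in> \<sigma>" by auto
    have pc: "s \<in> carrier GG" "r \<in> carrier GG" using S2_sub t by auto
    have rw: "r \<otimes> inv s = w" using t unfolding Q_def by auto
    have "x = s \<otimes> (inv s \<otimes> x)" using pc xc by (simp add: m_assoc[symmetric])
    moreover have "y = r \<otimes> (inv s \<otimes> x)"
    proof -
      have "r \<otimes> (inv s \<otimes> x) = w \<otimes> x" using rw pc xc by (simp add: m_assoc[symmetric])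
      also have "\<dots> = y" unfolding w_def using xc by (simp add: m_assoc)
      finally show ?thesis by simp
    qed
    ultimately have "e \<subseteq> \<tau>" using t e by blast
    moreover have "\<tau> \<in> hdz GG S2" unfolding hdz_def using t pc xc by blast
    ultimately show "\<tau> \<in> {\<tau> \<in> hdz GG S2. e \<subseteq> \<tau>}" by blast
  qed
  have inj: "inj_on ?f (SIGMA p:Q. ?B p)"
  proof (rule inj_onI, clarsimp)
    fix r s \<sigma> r' s' \<sigma>' assume a: "(r, s) \<in> Q" "\<sigma> \<in> S2" "r \<in> \<sigma>" "s \<in> \<sigma>"
      "(r', s') \<in> Q" "\<sigma>' \<in> S2" "r' \<in> \<sigma>'" "s' \<in> \<sigma>'"
      "(\<lambda>z. z \<otimes> (inv s \<otimes> x)) ` \<sigma> = (\<lambda>z. z \<otimes> (inv s' \<otimes> x)) ` \<sigma>'"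
    have pc: "s \<in> carrier GG" "s' \<in> carrier GG" "r \<in> carrier GG" "r' \<in> carrier GG"
      using S2_sub a by auto
    from shift_inj[OF a(2) a(6) _ _ a(9)] pc xc
    have "\<sigma> = \<sigma>'" "inv s \<otimes> x = inv s' \<otimes> x" by auto
    then have ss: "\<sigma> = \<sigma>'" "s = s'" using pc xc by (metis inv_closed inv_inv r_cancel)+
    have "r \<otimes> inv s = r' \<otimes> inv s'" using a(1,5) unfolding Q_def by auto
    then have "r = r'" using ss pc by (metis inv_closed r_cancel)
    then show "r = r' \<and> s = s' \<and> \<sigma> = \<sigma>'" using ss by simp
  qed
  have Bd: "card (?B p) = d" if "p \<in> Q" for p
  proof -
    have "{fst p, snd p} \<in> edges2 S2" using that unfolding Q_def by auto
    then show ?thesis using reg unfolding regular_cx_def by auto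
  qed
  have "card {\<tau> \<in> hdz GG S2. e \<subseteq> \<tau>} = card (SIGMA p:Q. ?B p)"
    unfolding img using inj by (rule card_image)
  also have "\<dots> = (\<Sum>p\<in>Q. card (?B p))" using S2_fin by (simp add: Qeq)
  also have "\<dots> = (\<Sum>p\<in>Q. d)" using Bd by simp
  also have "\<dots> = 2 * d" using Qd by (simp add: Qeq)
  finally show "card {\<tau> \<in> hdz GG S2. e \<subseteq> \<tau>} = 2 * d" .
qed

end

lemma regular_image:
  assumes inj: "inj_on f V" and sub: "\<forall>t\<in>X2. t \<subseteq> V" and reg: "regular_cx d X2"
  shows "regular_cx d ((\<lambda>t. f ` t) ` X2)"
  unfolding regular_cx_def
proof
  fix e assume "e \<in> edges2 ((\<lambda>t. f ` t) ` X2)"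
  then obtain t where e: "card e = 2" "t \<in> X2" "e \<subseteq> f ` t" unfolding edges2_def by auto
  define e0 where "e0 = {v\<in>t. f v \<in> e}"
  have e0t: "e0 \<subseteq> t" unfolding e0_def by auto
  have fe0: "f ` e0 = e" unfolding e0_def using e by auto
  have injt: "inj_on f t" using inj sub e(2) inj_on_subset by blast
  have ce0: "card e0 = 2" using e(1) fe0 card_image[OF inj_on_subset[OF injt e0t]] by simp
  have E0: "e0 \<in> edges2 X2" unfolding edges2_def using ce0 e0t e(2) by auto
  have seteq: "{\<tau> \<in> (\<lambda>t. f ` t) ` X2. e \<subseteq> \<tau>} = (\<lambda>t. f ` t) ` {t' \<in> X2. e0 \<subseteq> t'}"
  proof (intro equalityI subsetI)
    fix \<tau> assume "\<tau> \<in> {\<tau> \<in> (\<lambda>t. f ` t) ` X2. e \<subseteq> \<tau>}"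
    then obtain t' where t': "\<tau> = f ` t'" "t' \<in> X2" "e \<subseteq> f ` t'" by auto
    have "e0 \<subseteq> t'"
    proof
      fix v assume v: "v \<in> e0"
      then have "f v \<in> f ` t'" using fe0 t' by auto
      then obtain u where "u \<in> t'" "f u = f v" by auto
      moreover have "u \<in> V" "v \<in> V" using sub t' e(2) e0t v \<open>u \<in> t'\<close> by auto
      ultimately show "v \<in> t'" using inj by (metis inj_on_def)
    qed
    then show "\<tau> \<in> (\<lambda>t. f ` t) ` {t' \<in> X2. e0 \<subseteq> t'}" using t' by auto
  next
    fix \<tau> assume "\<tau> \<in> (\<lambda>t. f ` t) ` {t' \<in> X2. e0 \<subseteq> t'}"
    then show "\<tau> \<in> {\<tau> \<in> (\<lambda>t. f ` t) ` X2. e \<subseteq> \<tau>}" using fe0 by auto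
  qed
  have "inj_on (\<lambda>t. f ` t) {t' \<in> X2. e0 \<subseteq> t'}"
    by (rule inj_on_subset[OF inj_on_image_Pow[OF inj]]) (use sub in auto)
  then have "card {\<tau> \<in> (\<lambda>t. f ` t) ` X2. e \<subseteq> \<tau>} = card {t' \<in> X2. e0 \<subseteq> t'}"
    unfolding seteq by (rule card_image)
  also have "\<dots> = d" using reg E0 unfolding regular_cx_def by auto
  finally show "card {\<tau> \<in> (\<lambda>t. f ` t) ` X2. e \<subseteq> \<tau>} = d" .
qed

theorem mainTheorem10:
  fixes V :: "'v set" and A2 :: "'v set set" and C :: "'v \<Rightarrow> nat"
    and chi d :: nat and G :: "nat \<Rightarrow> 'g monoid"
    and K :: "nat \<Rightarrow> nat" and ix :: "'v \<Rightarrow> nat" and F :: "nat \<Rightarrow> nat \<Rightarrow> 'g"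
  assumes cx: "complex2 V A2" and ne: "A2 \<noteq> {}"
    and reg: "regular_cx d A2"
    and col: "strong_coloring C chi V A2"
    and grp: "\<And>c. c < chi \<Longrightarrow> group (G c)"
    and K_def: "\<And>c. c < chi \<Longrightarrow> K c = card {v\<in>V. C v = c}"
    and K_even: "\<And>c. c < chi \<Longrightarrow> even (K c)"
    and ix: "\<And>c. c < chi \<Longrightarrow> bij_betw ix {v\<in>V. C v = c} {..<K c}"
    and F_inj: "\<And>c. c < chi \<Longrightarrow> inj_on (F c) {..<K c}"
    and F_sub: "\<And>c. c < chi \<Longrightarrow> F c ` {..<K c} \<subseteq> carrier (G c)"
    and F_inv: "\<And>c i. c < chi \<Longrightarrow> i < K c \<Longrightarrow>
                  inv\<^bsub>G c\<^esub> (F c i) = F c ((i + K c div 2) mod K c)"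
    and F_no2: "\<And>c x. c < chi \<Longrightarrow> x \<in> F c ` {..<K c} \<Longrightarrow> group.ord (G c) x \<noteq> 2"
    and cts: "comm_triplet_structure (product_group {..<chi} G)
                ((\<lambda>t. (\<lambda>v. emb G chi (C v) (F (C v) (ix v))) ` t) ` A2)"
  shows "card (\<Union>(hdz (product_group {..<chi} G)
                  ((\<lambda>t. (\<lambda>v. emb G chi (C v) (F (C v) (ix v))) ` t) ` A2)))
           = card (carrier (product_group {..<chi} G))
      \<and> (\<forall>x\<in>\<Union>(hdz (product_group {..<chi} G)
                  ((\<lambda>t. (\<lambda>v. emb G chi (C v) (F (C v) (ix v))) ` t) ` A2)).
            card {\<tau> \<in> hdz (product_group {..<chi} G)
                  ((\<lambda>t. (\<lambda>v. emb G chi (C v) (F (C v) (ix v))) ` t) ` A2). x \<in> \<tau>}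
            = 3 * card A2)
      \<and> regular_cx (2 * d) (hdz (product_group {..<chi} G)
                  ((\<lambda>t. (\<lambda>v. emb G chi (C v) (F (C v) (ix v))) ` t) ` A2))"
proof -
  define P where "P = product_group {..<chi} G"
  define \<phi> where "\<phi> = (\<lambda>v. emb G chi (C v) (F (C v) (ix v)))"
  define S2 where "S2 = (\<lambda>t. \<phi> ` t) ` A2"
  have finV: "finite V" and A2V: "\<forall>t\<in>A2. t \<subseteq> V" and A2c: "\<forall>t\<in>A2. card t = 3"
    using cx unfolding complex2_def by auto
  have Cv: "C v < chi" if "v \<in> V" for v using col that unfolding strong_coloring_def by auto
  have ixK: "ix v < K (C v)" if "v \<in> V" for v
    using ix[OF Cv[OF that]] that unfolding bij_betw_def by auto
  have gP: "group P" unfolding P_def by (rule product_group) (use grp in auto)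
  have Fne1: "F c i \<noteq> \<one>\<^bsub>G c\<^esub>" if c: "c < chi" and i: "i < K c" for c i
  proof
    assume a: "F c i = \<one>\<^bsub>G c\<^esub>"
    have "inv\<^bsub>G c\<^esub> (F c i) = F c i" using a grp[OF c] by (simp add: group.is_monoid monoid.inv_one)
    then have "F c ((i + K c div 2) mod K c) = F c i" using F_inv[OF c i] by simp
    moreover have "(i + K c div 2) mod K c < K c" using i by simp
    ultimately have "(i + K c div 2) mod K c = i" using F_inj[OF c] i by (auto simp: inj_on_def)
    moreover obtain m where "K c = 2 * m" using K_even[OF c] by auto
    ultimately show False using i by (cases "i < m") (auto simp: mod_if split: if_splits)
  qed
  have \<phi>c: "\<phi> v \<in> carrier P" if v: "v \<in> V" for v
  proof -
    have "F (C v) (ix v) \<in> carrier (G (C v))" using F_sub[OF Cv[OF v]] ixK[OF v] by auto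
    moreover have "\<one>\<^bsub>G j\<^esub> \<in> carrier (G j)" if "j < chi" for j
      using grp[OF that] by (simp add: group.is_monoid monoid.one_closed)
    ultimately show ?thesis unfolding P_def \<phi>_def emb_def by auto
  qed
  have \<phi>at: "\<phi> v (C v) = F (C v) (ix v)" if v: "v \<in> V" for v
    using Cv[OF v] unfolding \<phi>_def emb_def by simp
  have \<phi>inj: "inj_on \<phi> V"
  proof (rule inj_onI)
    fix u v assume u: "u \<in> V" and v: "v \<in> V" and eq: "\<phi> u = \<phi> v"
    show "u = v"
    proof (cases "C u = C v")
      case True
      then have "F (C u) (ix u) = F (C u) (ix v)" using \<phi>at[OF u] \<phi>at[OF v] eq by metis
      then have "ix u = ix v" using F_inj[OF Cv[OF u]] ixK[OF u] ixK[OF v] True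
        by (auto simp: inj_on_def)
      then show ?thesis using ix[OF Cv[OF u]] u v True unfolding bij_betw_def inj_on_def by auto
    next
      case False
      have "\<phi> v (C u) = \<one>\<^bsub>G (C u)\<^esub>" using False Cv[OF u] unfolding \<phi>_def emb_def by auto
      then have "F (C u) (ix u) = \<one>\<^bsub>G (C u)\<^esub>" using \<phi>at[OF u] eq by simp
      then show ?thesis using Fne1[OF Cv[OF u] ixK[OF u]] by simp
    qed
  qed
  have finA2: "finite A2" using A2V finV by (meson PowI finite_Pow_iff finite_subset subsetI)
  have loc: "ctsl P S2"
  proof -
    have un: "let T = edges2 S2; To = {(a, b). {a, b} \<in> T} in
       (\<forall>s\<in>carrier P. {s, inv\<^bsub>P\<^esub> s} \<notin> T) \<and>
       (\<exists>k. regular_cx k S2) \<and>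
       (\<forall>a b. {a, b} \<in> T \<longrightarrow> a \<otimes>\<^bsub>P\<^esub> b = b \<otimes>\<^bsub>P\<^esub> a) \<and>
       (\<forall>a\<in>carrier P. \<forall>b\<in>carrier P. {a, b} \<in> T \<longleftrightarrow> {inv\<^bsub>P\<^esub> a, inv\<^bsub>P\<^esub> b} \<in> T) \<and>
       (\<forall>t\<in>To. \<forall>t'\<in>To. t \<noteq> t' \<and>
           fst t \<otimes>\<^bsub>P\<^esub> inv\<^bsub>P\<^esub> (snd t) = fst t' \<otimes>\<^bsub>P\<^esub> inv\<^bsub>P\<^esub> (snd t')
           \<longrightarrow> snd t' = inv\<^bsub>P\<^esub> (fst t) \<and> fst t' = inv\<^bsub>P\<^esub> (snd t)) \<and>
       (\<forall>x\<in>\<Union>S2. \<forall>y\<in>\<Union>S2. (x, y) \<in> To\<^sup>*)"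
      using cts unfolding comm_triplet_structure_def P_def S2_def \<phi>_def .
    show ?thesis
    proof (rule ctsl.intro[OF gP], rule ctsl_axioms.intro)
      fix \<sigma> assume "\<sigma> \<in> S2"
      then show "\<sigma> \<subseteq> carrier P" using \<phi>c A2V unfolding S2_def by auto
    next
      fix \<sigma> assume "\<sigma> \<in> S2"
      then obtain t where t: "t \<in> A2" "\<sigma> = \<phi> ` t" unfolding S2_def by auto
      then have "card \<sigma> = card t" using card_image inj_on_subset[OF \<phi>inj] A2V by metis
      then show "card \<sigma> = 3" using A2c t by simp
    next
      show "finite S2" unfolding S2_def using finA2 by simp
    next
      show "S2 \<noteq> {}" unfolding S2_def using ne by simp
    next
      fix s assume "s \<in> carrier P" then show "{s, inv\<^bsub>P\<^esub> s} \<notin> edges2 S2"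
        using un unfolding Let_def by blast
    next
      fix a b assume "{a, b} \<in> edges2 S2" then show "a \<otimes>\<^bsub>P\<^esub> b = b \<otimes>\<^bsub>P\<^esub> a"
        using un unfolding Let_def by blast
    next
      fix a b assume "a \<in> carrier P" "b \<in> carrier P" "{a, b} \<in> edges2 S2"
      then show "{inv\<^bsub>P\<^esub> a, inv\<^bsub>P\<^esub> b} \<in> edges2 S2"
        using un unfolding Let_def by blast
    next
      fix a b c e assume h: "{a, b} \<in> edges2 S2" "{c, e} \<in> edges2 S2" "(a, b) \<noteq> (c, e)"
        "a \<otimes>\<^bsub>P\<^esub> inv\<^bsub>P\<^esub> b = c \<otimes>\<^bsub>P\<^esub> inv\<^bsub>P\<^esub> e"
      have D: "\<forall>t\<in>{(a, b). {a, b} \<in> edges2 S2}. \<forall>t'\<in>{(a, b). {a, b} \<in> edges2 S2}. t \<noteq> t' \<and>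
           fst t \<otimes>\<^bsub>P\<^esub> inv\<^bsub>P\<^esub> (snd t) = fst t' \<otimes>\<^bsub>P\<^esub> inv\<^bsub>P\<^esub> (snd t')
           \<longrightarrow> snd t' = inv\<^bsub>P\<^esub> (fst t) \<and> fst t' = inv\<^bsub>P\<^esub> (snd t)"
        using un unfolding Let_def by blast
      show "e = inv\<^bsub>P\<^esub> a \<and> c = inv\<^bsub>P\<^esub> b"
        using D[rule_format, of "(a, b)" "(c, e)"] h by auto
    qed
  qed
  have regS: "regular_cx d S2" unfolding S2_def using regular_image[OF \<phi>inj A2V reg] .
  have cS: "card S2 = card A2" unfolding S2_def
    using card_image inj_on_subset[OF inj_on_image_Pow[OF \<phi>inj]] A2V by (metis PowI subsetI)
  have r1: "card (\<Union>(hdz P S2)) = card (carrier P)" using ctsl.union_hdz[OF loc] by simp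
  have r2: "\<forall>x\<in>\<Union>(hdz P S2). card {\<tau> \<in> hdz P S2. x \<in> \<tau>} = 3 * card A2"
    using ctsl.vertex_count[OF loc] ctsl.union_hdz[OF loc] cS by simp
  have r3: "regular_cx (2 * d) (hdz P S2)" using ctsl.edge_count[OF loc regS] .
  show ?thesis using r1 r2 r3 unfolding P_def S2_def \<phi>_def by blast
qed

end
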